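(* Let $\mathcal{U}\subseteq\mathbb{R}^n$ be a domain and $F=u\,\phi(r,s)$ a spherically symmetric Finsler metric on $\mathcal{U}$, where $u=|y|$, $r=|x|$, $s=\langle x,y\rangle/|y|$ and $\phi$ is smooth. Put $\sigma_1=\phi-s\phi_s$ and $\rho=\phi\,[\sigma_1+(r^2-s^2)\phi_{ss}]$. Then the norm of the mean Cartan torsion of $F$ is $$\|\mathbf{I}\|=\left|\frac{(n+1)(\sigma_1\phi_s-s\phi\phi_{ss})(\sigma_1+(r^2-s^2)\phi_{ss})+(r^2-s^2)(\sigma_1\phi_{sss}+3s\phi_{ss}^2)\phi}{2u\,\sigma_1\,\rho}\right|\sqrt{\frac{r^2-s^2}{\rho}}.$$
   Context: Here $|\cdot|$, $\langle\cdot,\cdot\rangle$ are the Euclidean norm and inner product on $\mathbb{R}^n$; subscripts $s$ denote partial derivatives in $s$. For a Finsler metric $F$: $g_{ij}=\tfrac12(F^2)_{y^iy^j}$, $(g^{ij})$ its inverse, $C_{ijk}=\tfrac12\partial g_{ij}/\partial y^k$, mean Cartan torsion $I_i=g^{jk}C_{ijk}$, and $\|\mathbf{I}\|^2=g^{ij}I_iI_j$. *)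

theory Defs
  imports "HOL-Analysis.Analysis"
begin

definition dirderiv :: "('a::real_normed_vector \<Rightarrow> real) \<Rightarrow> 'a \<Rightarrow> 'a \<Rightarrow> real" where
  "dirderiv f x v = deriv (\<lambda>t. f (x + t *\<^sub>R v)) 0"

fun iter_dir :: "'a::real_normed_vector list \<Rightarrow> ('a \<Rightarrow> real) \<Rightarrow> 'a \<Rightarrow> real" where
  "iter_dir [] f = f"
| "iter_dir (v # vs) f = (\<lambda>x. dirderiv (iter_dir vs f) x v)"

definition smooth_on :: "'a::euclidean_space set \<Rightarrow> ('a \<Rightarrow> real) \<Rightarrow> bool" where
  "smooth_on S f \<longleftrightarrow> open S \<and>
     (\<forall>vs. set vs \<subseteq> Basis \<longrightarrow>
        continuous_on S (iter_dir vs f) \<and>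
        (\<forall>v\<in>Basis. \<forall>x\<in>S.
           ((\<lambda>t. iter_dir vs f (x + t *\<^sub>R v)) has_real_derivative iter_dir (v # vs) f x) (at 0)))"

definition ypd :: "'n::finite \<Rightarrow> (real^'n \<Rightarrow> real) \<Rightarrow> real^'n \<Rightarrow> real" where
  "ypd i f y = dirderiv f y (axis i 1)"

definition fund_tensor :: "(real^'n \<Rightarrow> real^'n \<Rightarrow> real) \<Rightarrow> real^'n \<Rightarrow> real^'n \<Rightarrow> 'n::finite \<Rightarrow> 'n \<Rightarrow> real" where
  "fund_tensor F x y i j = (1/2) * ypd i (\<lambda>y'. ypd j (\<lambda>y''. (F x y'')\<^sup>2) y') y"

definition fund_matrix :: "(real^'n \<Rightarrow> real^'n \<Rightarrow> real) \<Rightarrow> real^'n \<Rightarrow> real^'n \<Rightarrow> real^'n^'n::finite" where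
  "fund_matrix F x y = (\<chi> i j. fund_tensor F x y i j)"

definition cartan :: "(real^'n \<Rightarrow> real^'n \<Rightarrow> real) \<Rightarrow> real^'n \<Rightarrow> real^'n \<Rightarrow> 'n::finite \<Rightarrow> 'n \<Rightarrow> 'n \<Rightarrow> real" where
  "cartan F x y i j k = (1/2) * ypd k (\<lambda>y'. fund_tensor F x y' i j) y"

definition mean_cartan :: "(real^'n \<Rightarrow> real^'n \<Rightarrow> real) \<Rightarrow> real^'n \<Rightarrow> real^'n \<Rightarrow> 'n::finite \<Rightarrow> real" where
  "mean_cartan F x y i =
     (\<Sum>j\<in>UNIV. \<Sum>k\<in>UNIV. matrix_inv (fund_matrix F x y) $ j $ k * cartan F x y i j k)"

definition mean_cartan_norm :: "(real^'n \<Rightarrow> real^'n \<Rightarrow> real) \<Rightarrow> real^'n \<Rightarrow> real^'n::finite \<Rightarrow> real" where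
  "mean_cartan_norm F x y =
     sqrt (\<Sum>i\<in>UNIV. \<Sum>j\<in>UNIV. matrix_inv (fund_matrix F x y) $ i $ j
                                   * mean_cartan F x y i * mean_cartan F x y j)"

definition finsler_metric :: "(real^'n::finite) set \<Rightarrow> (real^'n \<Rightarrow> real^'n \<Rightarrow> real) \<Rightarrow> bool" where
  "finsler_metric U F \<longleftrightarrow>
     open U \<and>
     smooth_on (U \<times> (UNIV - {0})) (\<lambda>p. F (fst p) (snd p)) \<and>
     (\<forall>x\<in>U. \<forall>y. F x y \<ge> 0) \<and>
     (\<forall>x\<in>U. \<forall>y. \<forall>l>0. F x (l *\<^sub>R y) = l * F x y) \<and>
     (\<forall>x\<in>U. \<forall>y. y \<noteq> 0 \<longrightarrow>
        (\<forall>\<xi>::real^'n. \<xi> \<noteq> 0 \<longrightarrow>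
           (\<Sum>i\<in>UNIV. \<Sum>j\<in>UNIV. fund_tensor F x y i j * \<xi> $ i * \<xi> $ j) > 0))"

definition ds :: "(real \<Rightarrow> real \<Rightarrow> real) \<Rightarrow> real \<Rightarrow> real \<Rightarrow> real" where
  "ds \<phi> r s = deriv (\<lambda>t. \<phi> r t) s"

end

theory Submission
  imports Defs
begin

lemma deriv_shift0: "deriv (\<lambda>t. g (b + t)) 0 = deriv g (b::real)"
proof -
  have "\<And>D. ((\<lambda>t. g (b + t)) has_field_derivative D) (at 0) \<longleftrightarrow> (g has_field_derivative D) (at b)"
    using DERIV_shift[of g _ 0 b] by (simp add: add.commute)
  then show ?thesis unfolding deriv_def by simp
qed

lemma iter_ds:
  "iter_dir (replicate k (0::real,1::real)) (\<lambda>p. \<phi> (fst p) (snd p)) (a,b) = (ds ^^ k) \<phi> a b"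
proof (induction k arbitrary: a b)
  case 0 then show ?case by simp
next
  case (Suc k)
  have "iter_dir (replicate (Suc k) (0::real,1::real)) (\<lambda>p. \<phi> (fst p) (snd p)) (a,b)
      = deriv (\<lambda>t. (ds ^^ k) \<phi> a (b + t)) 0"
    by (simp add: dirderiv_def Suc)
  also have "\<dots> = (ds ^^ Suc k) \<phi> a b"
    by (simp add: deriv_shift0 ds_def)
  finally show ?case .
qed

lemma ds_deriv:
  assumes "smooth_on \<Omega> (\<lambda>p. \<phi> (fst p) (snd p))" "(a,b) \<in> \<Omega>"
  shows "((ds ^^ k) \<phi> a has_real_derivative (ds ^^ Suc k) \<phi> a b) (at b)"
proof -
  have B: "(0::real,1::real) \<in> Basis" by (simp add: Basis_prod_def)
  have "set (replicate k (0::real,1::real)) \<subseteq> Basis" using B by auto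
  with assms have "((\<lambda>t. iter_dir (replicate k (0::real,1::real)) (\<lambda>p. \<phi> (fst p) (snd p)) ((a,b) + t *\<^sub>R (0,1)))
     has_real_derivative iter_dir ((0,1) # replicate k (0::real,1::real)) (\<lambda>p. \<phi> (fst p) (snd p)) (a,b)) (at 0)"
    unfolding smooth_on_def using B by blast
  then have "((\<lambda>t. (ds ^^ k) \<phi> a (t + b)) has_real_derivative (ds ^^ Suc k) \<phi> a b) (at 0)"
    using iter_ds[of "Suc k" \<phi> a b] by (simp add: iter_ds add.commute)
  then show ?thesis using DERIV_shift[of "(ds ^^ k) \<phi> a" _ 0 b] by simp
qed

definition ll :: "real^'n::finite \<Rightarrow> real^'n" where "ll y = (1 / norm y) *\<^sub>R y"
definition sf :: "real^'n::finite \<Rightarrow> real^'n \<Rightarrow> real" where "sf x y = inner x y / norm y"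
definition zz :: "real^'n::finite \<Rightarrow> real^'n \<Rightarrow> real^'n" where "zz x y = x - sf x y *\<^sub>R ll y"

lemma line_norm:
  fixes y v :: "real^'n::finite"
  assumes "y \<noteq> 0"
  shows "((\<lambda>t. norm (y + t *\<^sub>R v)) has_real_derivative inner (ll y) v) (at 0)"
proof -
  have "(norm has_derivative (\<lambda>h. h \<bullet> sgn y)) (at (y + 0 *\<^sub>R v))"
    using has_derivative_norm[OF assms] by simp
  moreover have "((\<lambda>t. y + t *\<^sub>R v) has_derivative (\<lambda>t. t *\<^sub>R v)) (at 0)"
    by (auto intro!: derivative_eq_intros)
  ultimately have "((\<lambda>t. norm (y + t *\<^sub>R v)) has_derivative (\<lambda>t. (t *\<^sub>R v) \<bullet> sgn y)) (at 0)"
    using has_derivative_compose by blast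
  moreover have "(\<lambda>t. (t *\<^sub>R v) \<bullet> sgn y) = (*) (inner (ll y) v)"
    by (auto simp: sgn_div_norm ll_def inner_commute field_simps)
  ultimately show ?thesis by (simp add: has_field_derivative_def)
qed

lemma line_inner:
  fixes y v x :: "real^'n::finite"
  shows "((\<lambda>t. inner x (y + t *\<^sub>R v)) has_real_derivative inner x v) (at 0)"
  by (simp add: inner_add_right) (auto intro!: derivative_eq_intros)

lemma line_comp:
  fixes y v :: "real^'n::finite"
  shows "((\<lambda>t. (y + t *\<^sub>R v) $ j) has_real_derivative v $ j) (at 0)"
  by simp (auto intro!: derivative_eq_intros)

lemma atom_s:
  fixes y v x :: "real^'n::finite"
  assumes "y \<noteq> 0"
  shows "((\<lambda>t. sf x (y + t *\<^sub>R v)) has_real_derivative inner (zz x y) v / norm y) (at 0)"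
proof -
  have "((\<lambda>t. inner x (y + t *\<^sub>R v) / norm (y + t *\<^sub>R v)) has_real_derivative
     (inner x v * norm y - inner x y * inner (ll y) v) / (norm y * norm y)) (at 0)"
    using DERIV_divide[OF line_inner line_norm[OF assms]] assms by simp
  moreover have "(inner x v * norm y - inner x y * inner (ll y) v) / (norm y * norm y)
      = inner (zz x y) v / norm y"
    using assms by (simp add: zz_def sf_def ll_def inner_diff_left field_simps)
  ultimately show ?thesis by (simp add: sf_def)
qed

lemma atom_l:
  fixes y v :: "real^'n::finite"
  assumes "y \<noteq> 0"
  shows "((\<lambda>t. ll (y + t *\<^sub>R v) $ j) has_real_derivative (v$j - ll y $ j * inner (ll y) v) / norm y) (at 0)"
proof -
  have "((\<lambda>t. (y + t *\<^sub>R v) $ j / norm (y + t *\<^sub>R v)) has_real_derivative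
     (v $ j * norm y - y $ j * inner (ll y) v) / (norm y * norm y)) (at 0)"
    using DERIV_divide[OF line_comp line_norm[OF assms]] assms by simp
  moreover have "(v $ j * norm y - y $ j * inner (ll y) v) / (norm y * norm y)
      = (v$j - ll y $ j * inner (ll y) v) / norm y"
    using assms by (simp add: ll_def field_simps)
  ultimately show ?thesis by (simp add: ll_def)
qed

lemma atom_z:
  fixes y v x :: "real^'n::finite"
  assumes "y \<noteq> 0"
  shows "((\<lambda>t. zz x (y + t *\<^sub>R v) $ j) has_real_derivative
     - (inner (zz x y) v / norm y * ll y $ j + sf x y * ((v$j - ll y $ j * inner (ll y) v) / norm y))) (at 0)"
proof -
  have "((\<lambda>t. sf x (y + t *\<^sub>R v) * ll (y + t *\<^sub>R v) $ j) has_real_derivative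
     inner (zz x y) v / norm y * ll y $ j + (v$j - ll y $ j * inner (ll y) v) / norm y * sf x y) (at 0)"
    using DERIV_mult[OF atom_s[OF assms, of x v] atom_l[OF assms, of v j]] by simp
  from DERIV_diff[OF DERIV_const[of "x $ j"] this]
  show ?thesis by (simp add: zz_def algebra_simps)
qed

lemma atom_f:
  fixes y v x :: "real^'n::finite"
  assumes "y \<noteq> 0" "(f has_real_derivative f') (at (sf x y))"
  shows "((\<lambda>t. f (sf x (y + t *\<^sub>R v))) has_real_derivative f' * (inner (zz x y) v / norm y)) (at 0)"
proof -
  have "DERIV f (sf x (y + 0 *\<^sub>R v)) :> f'" using assms by simp
  from DERIV_chain2[OF this atom_s[OF assms(1)]] show ?thesis by simp
qed

definition gco :: "real \<Rightarrow> real \<Rightarrow> real \<Rightarrow> real \<Rightarrow> real \<Rightarrow> real \<Rightarrow> real \<Rightarrow> real \<Rightarrow> real \<Rightarrow> real" where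
  "gco p0 p1 qc s li lj zi zj d = (p0*p0 - s*p0*p1)*d + p0*p1*(li*zj + zi*lj) + (p1*p1 + p0*qc)*zi*zj + s*p0*p1*li*lj"

definition cco :: "real \<Rightarrow> real \<Rightarrow> real \<Rightarrow> real \<Rightarrow> real \<Rightarrow> real \<Rightarrow> real \<Rightarrow> real \<Rightarrow> real \<Rightarrow> real \<Rightarrow> real \<Rightarrow> real \<Rightarrow> real \<Rightarrow> real \<Rightarrow> real \<Rightarrow> real" where
  "cco p0 p1 qc qd s u li lj zi zj d vi vj a b =
     ((p0*p1 - s*(p1*p1 + p0*qc)) * (d*b + vi*zj + vj*zi - (li*lj*b + li*zj*a + zi*lj*a))
      + (3*p1*qc + p0*qd)*zi*zj*b) / (2*u)"

lemma gen1:
  fixes U Fa :: "real \<Rightarrow> real"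
  assumes "(U has_real_derivative a) (at 0)" "(Fa has_real_derivative p1 * (b / U 0)) (at 0)" "U 0 \<noteq> 0"
  shows "((\<lambda>t. (U t * Fa t)\<^sup>2) has_real_derivative 2 * U 0 * Fa 0 * (Fa 0 * a + p1 * b)) (at 0)"
proof -
  have "((\<lambda>t. (U t * Fa t)\<^sup>2) has_real_derivative 2 * (U 0 * Fa 0) * (a * Fa 0 + p1 * (b / U 0) * U 0)) (at 0)"
    by (auto intro!: derivative_eq_intros assms)
  then show ?thesis using assms(3) by (simp add: field_simps)
qed

lemma gen2:
  fixes U Fa Fb L Z :: "real \<Rightarrow> real"
  assumes "(U has_real_derivative a) (at 0)"
    "(Fa has_real_derivative pb * (b / u)) (at 0)"
    "(Fb has_real_derivative qc * (b / u)) (at 0)"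
    "(L has_real_derivative (v - l * a) / u) (at 0)"
    "(Z has_real_derivative - (b / u * l + s * ((v - l * a) / u))) (at 0)"
    "U 0 = u" "Fa 0 = pa" "Fb 0 = pb" "L 0 = l" "Z 0 = z" "u \<noteq> 0"
  shows "((\<lambda>t. 2 * U t * Fa t * (Fa t * L t + Fb t * Z t)) has_real_derivative
     2 * gco pa pb qc s a l b z v) (at 0)"
  apply (rule derivative_eq_intros assms refl)+
  using assms(6-) apply (simp add: gco_def field_simps)
  done

lemma gen3:
  fixes Fa Fb Fc S Li Lj Zi Zj :: "real \<Rightarrow> real"
  assumes "(Fa has_real_derivative pb * (b / u)) (at 0)"
    "(Fb has_real_derivative pc * (b / u)) (at 0)"
    "(Fc has_real_derivative qd * (b / u)) (at 0)"
    "(S has_real_derivative b / u) (at 0)"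
    "(Li has_real_derivative (vi - li * a) / u) (at 0)"
    "(Lj has_real_derivative (vj - lj * a) / u) (at 0)"
    "(Zi has_real_derivative - (b / u * li + s * ((vi - li * a) / u))) (at 0)"
    "(Zj has_real_derivative - (b / u * lj + s * ((vj - lj * a) / u))) (at 0)"
    "Fa 0 = pa" "Fb 0 = pb" "Fc 0 = pc" "S 0 = s" "Li 0 = li" "Lj 0 = lj" "Zi 0 = zi" "Zj 0 = zj"
    "u \<noteq> 0"
  shows "((\<lambda>t. gco (Fa t) (Fb t) (Fc t) (S t) (Li t) (Lj t) (Zi t) (Zj t) d) has_real_derivative
     2 * cco pa pb pc qd s u li lj zi zj d vi vj a b) (at 0)"
  unfolding gco_def
  apply (rule derivative_eq_intros assms refl)+
  using assms(9-) apply (simp add: cco_def field_simps)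
  done

definition del :: "'n \<Rightarrow> 'n \<Rightarrow> real" where "del i j = (if i = j then 1 else 0)"

lemma axis_del: "axis i (1::real) $ j = del i j"
  by (auto simp: axis_def del_def)

lemma del_sym: "del i j = del j i" by (auto simp: del_def)

lemma inner_axis1: "inner (w::real^'n::finite) (axis i 1) = w $ i"
  by (simp add: inner_axis)

lemma ev_ne0:
  fixes y v :: "real^'n::finite"
  assumes "y \<noteq> 0"
  shows "eventually (\<lambda>t. y + t *\<^sub>R v \<noteq> 0) (nhds (0::real))"
proof -
  have "((\<lambda>t. y + t *\<^sub>R v) \<longlongrightarrow> y) (nhds (0::real))"
  proof -
    have "continuous (at 0) (\<lambda>t::real. y + t *\<^sub>R v)" by (intro continuous_intros)
    then have "((\<lambda>t. y + t *\<^sub>R v) \<longlongrightarrow> y) (at (0::real))"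
      by (simp add: continuous_at)
    then show ?thesis by (simp add: tendsto_nhds_iff)
  qed
  then show ?thesis using assms by (rule tendsto_imp_eventually_ne)
qed

definition G1 :: "real^'n::finite \<Rightarrow> (real \<Rightarrow> real \<Rightarrow> real) \<Rightarrow> real^'n \<Rightarrow> 'n \<Rightarrow> real" where
  "G1 x \<phi> y j = 2 * norm y * \<phi> (norm x) (sf x y) * (\<phi> (norm x) (sf x y) * ll y $ j + ds \<phi> (norm x) (sf x y) * zz x y $ j)"

definition gform :: "real^'n::finite \<Rightarrow> (real \<Rightarrow> real \<Rightarrow> real) \<Rightarrow> real^'n \<Rightarrow> 'n \<Rightarrow> 'n \<Rightarrow> real" where
  "gform x \<phi> y i j = gco (\<phi> (norm x) (sf x y)) (ds \<phi> (norm x) (sf x y)) (ds (ds \<phi>) (norm x) (sf x y)) (sf x y)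
      (ll y $ i) (ll y $ j) (zz x y $ i) (zz x y $ j) (del i j)"

definition cform :: "real^'n::finite \<Rightarrow> (real \<Rightarrow> real \<Rightarrow> real) \<Rightarrow> real^'n \<Rightarrow> 'n \<Rightarrow> 'n \<Rightarrow> 'n \<Rightarrow> real" where
  "cform x \<phi> y i j k = cco (\<phi> (norm x) (sf x y)) (ds \<phi> (norm x) (sf x y)) (ds (ds \<phi>) (norm x) (sf x y))
      (ds (ds (ds \<phi>)) (norm x) (sf x y)) (sf x y) (norm y)
      (ll y $ i) (ll y $ j) (zz x y $ i) (zz x y $ j) (del i j) (del k i) (del k j) (ll y $ k) (zz x y $ k)"

context
  fixes x :: "real^'n::finite" and \<phi> :: "real \<Rightarrow> real \<Rightarrow> real"
  assumes HD: "\<And>k y. y \<noteq> 0 \<Longrightarrow> ((ds ^^ k) \<phi> (norm x) has_real_derivative (ds ^^ Suc k) \<phi> (norm x) (sf x y)) (at (sf x y))"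
begin

lemma L1:
  assumes "y \<noteq> 0"
  shows "ypd j (\<lambda>y'. (norm y' * \<phi> (norm x) (sf x y'))\<^sup>2) y = G1 x \<phi> y j"
proof -
  let ?v = "axis j (1::real) :: real^'n"
  have d1: "((\<lambda>t. norm (y + t *\<^sub>R ?v)) has_real_derivative ll y $ j) (at 0)"
    using line_norm[OF assms, of ?v] by (simp add: inner_axis1)
  have "((\<lambda>t. (ds^^0) \<phi> (norm x) (sf x (y + t *\<^sub>R ?v))) has_real_derivative (ds^^Suc 0) \<phi> (norm x) (sf x y) * (inner (zz x y) ?v / norm y)) (at 0)"
    by (rule atom_f[OF assms HD[of y 0, OF assms]])
  then have d2: "((\<lambda>t. \<phi> (norm x) (sf x (y + t *\<^sub>R ?v))) has_real_derivative ds \<phi> (norm x) (sf x y) * (zz x y $ j / norm (y + 0 *\<^sub>R ?v))) (at 0)"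
    by (simp add: inner_axis1)
  have "((\<lambda>t. (norm (y + t *\<^sub>R ?v) * \<phi> (norm x) (sf x (y + t *\<^sub>R ?v)))\<^sup>2) has_real_derivative G1 x \<phi> y j) (at 0)"
    using gen1[OF d1 d2] assms by (simp add: G1_def)
  then show ?thesis unfolding ypd_def dirderiv_def by (rule DERIV_imp_deriv)
qed


lemma L2:
  assumes "y \<noteq> 0"
  shows "fund_tensor (\<lambda>x y. norm y * \<phi> (norm x) (sf x y)) x y i j = gform x \<phi> y i j"
proof -
  let ?v = "axis i (1::real) :: real^'n"
  have h1: "((\<lambda>t. norm (y + t *\<^sub>R ?v)) has_real_derivative ll y $ i) (at 0)"
    using line_norm[OF assms, of ?v] by (simp add: inner_axis1)
  have h2: "((\<lambda>t. \<phi> (norm x) (sf x (y + t *\<^sub>R ?v))) has_real_derivative ds \<phi> (norm x) (sf x y) * (zz x y $ i / norm y)) (at 0)"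
    using atom_f[OF assms HD[of y 0, OF assms], of ?v] by (simp add: inner_axis1)
  have h3: "((\<lambda>t. ds \<phi> (norm x) (sf x (y + t *\<^sub>R ?v))) has_real_derivative ds (ds \<phi>) (norm x) (sf x y) * (zz x y $ i / norm y)) (at 0)"
    using atom_f[OF assms HD[of y 1, OF assms], of ?v] by (simp add: inner_axis1)
  have h4: "((\<lambda>t. ll (y + t *\<^sub>R ?v) $ j) has_real_derivative (del i j - ll y $ j * ll y $ i) / norm y) (at 0)"
    using atom_l[OF assms, of ?v j] by (simp add: inner_axis1 axis_del)
  have h5: "((\<lambda>t. zz x (y + t *\<^sub>R ?v) $ j) has_real_derivative - (zz x y $ i / norm y * ll y $ j + sf x y * ((del i j - ll y $ j * ll y $ i) / norm y))) (at 0)"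
    using atom_z[OF assms, of x ?v j] by (simp add: inner_axis1 axis_del)
  have G: "((\<lambda>t. G1 x \<phi> (y + t *\<^sub>R ?v) j) has_real_derivative 2 * gform x \<phi> y i j) (at 0)"
    unfolding G1_def gform_def
    apply (rule gen2[OF h1 h2 h3 h4 h5])
    using assms by simp_all
  have "fund_tensor (\<lambda>x y. norm y * \<phi> (norm x) (sf x y)) x y i j
      = 1/2 * deriv (\<lambda>t. ypd j (\<lambda>y'. (norm y' * \<phi> (norm x) (sf x y'))\<^sup>2) (y + t *\<^sub>R ?v)) 0"
    by (simp add: fund_tensor_def ypd_def dirderiv_def)
  also have "\<dots> = 1/2 * deriv (\<lambda>t. G1 x \<phi> (y + t *\<^sub>R ?v) j) 0"
  proof -
    have ev: "eventually (\<lambda>t. ypd j (\<lambda>y'. (norm y' * \<phi> (norm x) (sf x y'))\<^sup>2) (y + t *\<^sub>R ?v) = G1 x \<phi> (y + t *\<^sub>R ?v) j) (nhds 0)"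
      by (rule eventually_mono[OF ev_ne0[OF assms, of ?v]]) (rule L1)
    show ?thesis using deriv_cong_ev[OF ev refl] by (simp only:)
  qed
  also have "\<dots> = gform x \<phi> y i j"
    using DERIV_imp_deriv[OF G] by simp
  finally show ?thesis .
qed

lemma L3:
  assumes "y \<noteq> 0"
  shows "cartan (\<lambda>x y. norm y * \<phi> (norm x) (sf x y)) x y i j k = cform x \<phi> y i j k"
proof -
  let ?v = "axis k (1::real) :: real^'n"
  have h1: "((\<lambda>t. \<phi> (norm x) (sf x (y + t *\<^sub>R ?v))) has_real_derivative ds \<phi> (norm x) (sf x y) * (zz x y $ k / norm y)) (at 0)"
    using atom_f[OF assms HD[of y 0, OF assms], of ?v] by (simp add: inner_axis1)
  have h2: "((\<lambda>t. ds \<phi> (norm x) (sf x (y + t *\<^sub>R ?v))) has_real_derivative ds (ds \<phi>) (norm x) (sf x y) * (zz x y $ k / norm y)) (at 0)"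
    using atom_f[OF assms HD[of y 1, OF assms], of ?v] by (simp add: inner_axis1)
  have h3: "((\<lambda>t. ds (ds \<phi>) (norm x) (sf x (y + t *\<^sub>R ?v))) has_real_derivative ds (ds (ds \<phi>)) (norm x) (sf x y) * (zz x y $ k / norm y)) (at 0)"
    using atom_f[OF assms HD[of y "Suc (Suc 0)", OF assms], of ?v] by (simp add: inner_axis1)
  have h4: "((\<lambda>t. sf x (y + t *\<^sub>R ?v)) has_real_derivative zz x y $ k / norm y) (at 0)"
    using atom_s[OF assms, of x ?v] by (simp add: inner_axis1)
  have h5: "((\<lambda>t. ll (y + t *\<^sub>R ?v) $ i) has_real_derivative (del k i - ll y $ i * ll y $ k) / norm y) (at 0)"
    using atom_l[OF assms, of ?v i] by (simp add: inner_axis1 axis_del)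
  have h6: "((\<lambda>t. ll (y + t *\<^sub>R ?v) $ j) has_real_derivative (del k j - ll y $ j * ll y $ k) / norm y) (at 0)"
    using atom_l[OF assms, of ?v j] by (simp add: inner_axis1 axis_del)
  have h7: "((\<lambda>t. zz x (y + t *\<^sub>R ?v) $ i) has_real_derivative - (zz x y $ k / norm y * ll y $ i + sf x y * ((del k i - ll y $ i * ll y $ k) / norm y))) (at 0)"
    using atom_z[OF assms, of x ?v i] by (simp add: inner_axis1 axis_del)
  have h8: "((\<lambda>t. zz x (y + t *\<^sub>R ?v) $ j) has_real_derivative - (zz x y $ k / norm y * ll y $ j + sf x y * ((del k j - ll y $ j * ll y $ k) / norm y))) (at 0)"
    using atom_z[OF assms, of x ?v j] by (simp add: inner_axis1 axis_del)
  have G: "((\<lambda>t. gform x \<phi> (y + t *\<^sub>R ?v) i j) has_real_derivative 2 * cform x \<phi> y i j k) (at 0)"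
    unfolding gform_def cform_def
    apply (rule gen3[OF h1 h2 h3 h4 h5 h6 h7 h8])
    using assms by simp_all
  have "cartan (\<lambda>x y. norm y * \<phi> (norm x) (sf x y)) x y i j k
      = 1/2 * deriv (\<lambda>t. fund_tensor (\<lambda>x y. norm y * \<phi> (norm x) (sf x y)) x (y + t *\<^sub>R ?v) i j) 0"
    by (simp add: cartan_def ypd_def dirderiv_def)
  also have "\<dots> = 1/2 * deriv (\<lambda>t. gform x \<phi> (y + t *\<^sub>R ?v) i j) 0"
  proof -
    have ev: "eventually (\<lambda>t. fund_tensor (\<lambda>x y. norm y * \<phi> (norm x) (sf x y)) x (y + t *\<^sub>R ?v) i j = gform x \<phi> (y + t *\<^sub>R ?v) i j) (nhds 0)"
      by (rule eventually_mono[OF ev_ne0[OF assms, of ?v]]) (rule L2)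
    show ?thesis using deriv_cong_ev[OF ev refl] by (simp only:)
  qed
  also have "\<dots> = cform x \<phi> y i j k"
    using DERIV_imp_deriv[OF G] by simp
  finally show ?thesis .
qed

end

definition Tm :: "real \<Rightarrow> real \<Rightarrow> real \<Rightarrow> real \<Rightarrow> real^'n::finite \<Rightarrow> real^'n \<Rightarrow> 'n \<Rightarrow> 'n \<Rightarrow> real" where
  "Tm m a b c l z j k = m * del j k + a * l$j * l$k + b * (l$j * z$k + z$j * l$k) + c * z$j * z$k"

lemma Tm_sym: "Tm m a b c l z j k = Tm m a b c l z k j"
  by (simp add: Tm_def del_def algebra_simps)

lemma sum_del1: "(\<Sum>k\<in>UNIV. del j k * f k) = (f j :: real)" for f :: "'n::finite \<Rightarrow> real"
proof -
  have "(\<Sum>k\<in>UNIV. del j k * f k) = (\<Sum>k\<in>UNIV. if j = k then f k else 0)"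
    by (rule sum.cong) (auto simp: del_def)
  then show ?thesis by (simp add: sum.delta)
qed

lemma sum_del2: "(\<Sum>k\<in>UNIV. f k * del k j) = (f j :: real)" for f :: "'n::finite \<Rightarrow> real"
proof -
  have "(\<Sum>k\<in>UNIV. f k * del k j) = (\<Sum>k\<in>UNIV. if k = j then f k else 0)"
    by (rule sum.cong) (auto simp: del_def)
  then show ?thesis by (simp add: sum.delta')
qed

lemma mv: "(\<Sum>k\<in>UNIV. Tm m a b c l z j k * p$k) =
   m * p$j + a * l$j * (l \<bullet> p) + b * (l$j * (z \<bullet> p) + z$j * (l \<bullet> p)) + c * z$j * (z \<bullet> p)"
proof -
  have "(\<Sum>k\<in>UNIV. Tm m a b c l z j k * p$k) =
     (\<Sum>k\<in>UNIV. m * (del j k * p$k)) + (\<Sum>k\<in>UNIV. (a * l$j) * (l$k * p$k))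
     + (\<Sum>k\<in>UNIV. (b * l$j) * (z$k * p$k)) + (\<Sum>k\<in>UNIV. (b * z$j) * (l$k * p$k))
     + (\<Sum>k\<in>UNIV. (c * z$j) * (z$k * p$k))"
    by (simp add: Tm_def sum.distrib algebra_simps)
  also have "\<dots> = m * p$j + a * l$j * (l \<bullet> p) + b * (l$j * (z \<bullet> p) + z$j * (l \<bullet> p)) + c * z$j * (z \<bullet> p)"
    apply (simp only: sum_distrib_left[symmetric] sum_del1)
    apply (simp add: inner_vec_def algebra_simps)
    done
  finally show ?thesis .
qed

lemma bil: "(\<Sum>j\<in>UNIV. \<Sum>k\<in>UNIV. Tm m a b c l z j k * (\<alpha>$j * \<beta>$k)) =
   m * (\<alpha> \<bullet> \<beta>) + a * (l \<bullet> \<alpha>) * (l \<bullet> \<beta>) + b * ((l \<bullet> \<alpha>) * (z \<bullet> \<beta>) + (z \<bullet> \<alpha>) * (l \<bullet> \<beta>)) + c * (z \<bullet> \<alpha>) * (z \<bullet> \<beta>)"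
proof -
  have "(\<Sum>j\<in>UNIV. \<Sum>k\<in>UNIV. Tm m a b c l z j k * (\<alpha>$j * \<beta>$k)) =
     (\<Sum>j\<in>UNIV. \<alpha>$j * (\<Sum>k\<in>UNIV. Tm m a b c l z j k * \<beta>$k))"
    by (simp add: sum_distrib_left mult_ac)
  also have "\<dots> = (\<Sum>j\<in>UNIV. m * (\<alpha>$j * \<beta>$j) + (a * (l \<bullet> \<beta>)) * (\<alpha>$j * l$j)
      + (b * (z \<bullet> \<beta>)) * (\<alpha>$j * l$j) + (b * (l \<bullet> \<beta>)) * (\<alpha>$j * z$j) + (c * (z \<bullet> \<beta>)) * (\<alpha>$j * z$j))"
    apply (simp only: mv)
    apply (simp add: algebra_simps)
    done
  also have "\<dots> = m * (\<alpha> \<bullet> \<beta>) + a * (l \<bullet> \<alpha>) * (l \<bullet> \<beta>) + b * ((l \<bullet> \<alpha>) * (z \<bullet> \<beta>) + (z \<bullet> \<alpha>) * (l \<bullet> \<beta>)) + c * (z \<bullet> \<alpha>) * (z \<bullet> \<beta>)"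
    apply (simp only: sum.distrib sum_distrib_left[symmetric])
    apply (simp add: inner_vec_def algebra_simps)
    done
  finally show ?thesis .
qed

lemma trace_Tm: "(\<Sum>j\<in>UNIV. \<Sum>k\<in>UNIV. Tm m a b c l z j k * del k j) =
   real CARD('n) * m + a * (l \<bullet> l) + 2 * b * (l \<bullet> z) + c * (z \<bullet> z)"
  for l :: "real^'n::finite"
proof -
  have "(\<Sum>j\<in>UNIV. \<Sum>k\<in>UNIV. Tm m a b c l z j k * del k j) = (\<Sum>j\<in>UNIV. Tm m a b c l z j j)"
    by (simp add: sum_del2)
  also have "\<dots> = (\<Sum>j\<in>UNIV. m + a * (l$j * l$j) + 2 * b * (l$j * z$j) + c * (z$j * z$j))"
    by (simp add: Tm_def del_def algebra_simps)
  also have "\<dots> = real CARD('n) * m + a * (l \<bullet> l) + 2 * b * (l \<bullet> z) + c * (z \<bullet> z)"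
    apply (simp only: sum.distrib sum_distrib_left[symmetric])
    apply (simp add: inner_vec_def)
    done
  finally show ?thesis .
qed

lemma row_inner: "(\<chi> k. Tm m a b c l z i k) \<bullet> p = m * p$i + a * l$i * (l \<bullet> p) + b * (l$i * (z \<bullet> p) + z$i * (l \<bullet> p)) + c * z$i * (z \<bullet> p)"
proof -
  have "(\<chi> k. Tm m a b c l z i k) \<bullet> p = (\<Sum>k\<in>UNIV. Tm m a b c l z i k * p$k)" by (simp add: inner_vec_def)
  then show ?thesis by (simp only: mv)
qed

lemma prodTm:
  assumes "l \<bullet> l = 1" "l \<bullet> z = 0" "z \<bullet> z = w"
  shows "(\<Sum>k\<in>UNIV. Tm m1 a1 b1 c1 l z i k * Tm m2 a2 b2 c2 l z k j) =
    m1 * m2 * del i j + (m2 * a1 + a2 * (m1 + a1) + b2 * b1 * w) * l$i * l$j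
    + (m2 * b1 + a2 * b1 + b2 * (m1 + c1 * w)) * z$i * l$j
    + (m2 * b1 + b2 * (m1 + a1) + c2 * b1 * w) * l$i * z$j
    + (m2 * c1 + b2 * b1 + c2 * (m1 + c1 * w)) * z$i * z$j"
proof -
  have zl: "z \<bullet> l = 0" using assms(2) by (simp add: inner_commute)
  have "(\<Sum>k\<in>UNIV. Tm m1 a1 b1 c1 l z i k * Tm m2 a2 b2 c2 l z k j)
     = (\<Sum>k\<in>UNIV. Tm m2 a2 b2 c2 l z j k * (\<chi> k. Tm m1 a1 b1 c1 l z i k) $ k)"
    by (simp add: Tm_sym[of m2 a2 b2 c2 l z _ j] mult.commute)
  also have "\<dots> = m2 * Tm m1 a1 b1 c1 l z i j + a2 * l$j * ((\<chi> k. Tm m1 a1 b1 c1 l z i k) \<bullet> l)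
      + b2 * (l$j * ((\<chi> k. Tm m1 a1 b1 c1 l z i k) \<bullet> z) + z$j * ((\<chi> k. Tm m1 a1 b1 c1 l z i k) \<bullet> l))
      + c2 * z$j * ((\<chi> k. Tm m1 a1 b1 c1 l z i k) \<bullet> z)"
    by (simp only: mv inner_commute) simp
  also have "\<dots> = m1 * m2 * del i j + (m2 * a1 + a2 * (m1 + a1) + b2 * b1 * w) * l$i * l$j
    + (m2 * b1 + a2 * b1 + b2 * (m1 + c1 * w)) * z$i * l$j
    + (m2 * b1 + b2 * (m1 + a1) + c2 * b1 * w) * l$i * z$j
    + (m2 * c1 + b2 * b1 + c2 * (m1 + c1 * w)) * z$i * z$j"
    by (simp only: row_inner assms zl) (simp add: Tm_def algebra_simps)
  finally show ?thesis .
qed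

lemma contract:
  fixes l z :: "real^'n::finite"
  assumes "l \<bullet> l = 1" "l \<bullet> z = 0" "z \<bullet> z = w"
  shows "(\<Sum>j\<in>UNIV. \<Sum>k\<in>UNIV. Tm m a b c l z j k *
     (K1 * (del i j * z$k + del i k * z$j + del k j * z$i - (l$i * l$j * z$k + l$i * z$j * l$k + z$i * l$j * l$k))
      + K2 * (z$i * z$j * z$k)))
   = z$i * (K1 * ((real CARD('n) + 1) * m + 3 * c * w) + K2 * w * (m + c * w))"
proof -
  have zl: "z \<bullet> l = 0" using assms(2) by (simp add: inner_commute)
  let ?e = "axis i (1::real) :: real^'n"
  have "(\<Sum>j\<in>UNIV. \<Sum>k\<in>UNIV. Tm m a b c l z j k *
     (K1 * (del i j * z$k + del i k * z$j + del k j * z$i - (l$i * l$j * z$k + l$i * z$j * l$k + z$i * l$j * l$k))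
      + K2 * (z$i * z$j * z$k)))
    = (\<Sum>j\<in>UNIV. \<Sum>k\<in>UNIV. K1 * (Tm m a b c l z j k * (?e$j * z$k)) + K1 * (Tm m a b c l z j k * (z$j * ?e$k))
       + (K1 * z$i) * (Tm m a b c l z j k * del k j) - (K1 * l$i) * (Tm m a b c l z j k * (l$j * z$k))
       - (K1 * l$i) * (Tm m a b c l z j k * (z$j * l$k)) - (K1 * z$i) * (Tm m a b c l z j k * (l$j * l$k))
       + (K2 * z$i) * (Tm m a b c l z j k * (z$j * z$k)))"
    by (intro sum.cong refl) (simp add: axis_del algebra_simps)
  also have "\<dots> = K1 * (\<Sum>j\<in>UNIV. \<Sum>k\<in>UNIV. Tm m a b c l z j k * (?e$j * z$k))
      + K1 * (\<Sum>j\<in>UNIV. \<Sum>k\<in>UNIV. Tm m a b c l z j k * (z$j * ?e$k))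
      + (K1 * z$i) * (\<Sum>j\<in>UNIV. \<Sum>k\<in>UNIV. Tm m a b c l z j k * del k j)
      - (K1 * l$i) * (\<Sum>j\<in>UNIV. \<Sum>k\<in>UNIV. Tm m a b c l z j k * (l$j * z$k))
      - (K1 * l$i) * (\<Sum>j\<in>UNIV. \<Sum>k\<in>UNIV. Tm m a b c l z j k * (z$j * l$k))
      - (K1 * z$i) * (\<Sum>j\<in>UNIV. \<Sum>k\<in>UNIV. Tm m a b c l z j k * (l$j * l$k))
      + (K2 * z$i) * (\<Sum>j\<in>UNIV. \<Sum>k\<in>UNIV. Tm m a b c l z j k * (z$j * z$k))"
    by (simp only: sum.distrib sum_subtractf sum_distrib_left)
  also have "\<dots> = z$i * (K1 * ((real CARD('n) + 1) * m + 3 * c * w) + K2 * w * (m + c * w))"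
    apply (simp only: bil trace_Tm assms zl)
    apply (simp add: inner_axis1 inner_axis' inner_commute[of ?e] algebra_simps)
    done
  finally show ?thesis .
qed

lemma inv_scalars:
  fixes p0 p1 p2 s w \<sigma> \<tau> :: real
  assumes nz: "p0 \<noteq> 0" "\<sigma> \<noteq> 0" "\<tau> \<noteq> 0"
  and sd: "\<sigma> = p0 - s*p1" and td: "\<tau> = \<sigma> + w*p2"
  and m1_def: "m1 = p0*\<sigma>" and a1_def: "a1 = s*p0*p1" and b1_def: "b1 = p0*p1" and c1_def: "c1 = p1*p1 + p0*p2"
    and m2_def: "m2 = 1/(p0*\<sigma>)" and a2_def: "a2 = (p0*\<sigma> + c1*w)/(p0*p0*(p0*\<tau>)) - 1/(p0*\<sigma>)"
    and b2_def: "b2 = -p1/(p0*(p0*\<tau>))" and c2_def: "c2 = -p2/(\<sigma>*(p0*\<tau>))"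
  shows "m1 * m2 = 1"
    "m2 * a1 + a2 * (m1 + a1) + b2 * b1 * w = 0"
    "m2 * b1 + a2 * b1 + b2 * (m1 + c1 * w) = 0"
    "m2 * b1 + b2 * (m1 + a1) + c2 * b1 * w = 0"
    "m2 * c1 + b2 * b1 + c2 * (m1 + c1 * w) = 0"
proof -
  have ss: "s*p1 = p0 - \<sigma>" using sd by simp
  have ww: "w*p2 = \<tau> - \<sigma>" using td by simp
  show "m1 * m2 = 1" using nz by (simp add: m1_def m2_def)
  show "m2 * a1 + a2 * (m1 + a1) + b2 * b1 * w = 0"
    using nz unfolding m1_def m2_def a2_def b2_def c2_def a1_def b1_def c1_def
    by (simp add: field_simps; simp add: algebra_simps sd td)
  show "m2 * b1 + a2 * b1 + b2 * (m1 + c1 * w) = 0"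
    using nz unfolding m1_def m2_def a2_def b2_def c2_def a1_def b1_def c1_def
    by (simp add: field_simps; simp add: algebra_simps sd td)
  show "m2 * b1 + b2 * (m1 + a1) + c2 * b1 * w = 0"
    using nz unfolding m1_def m2_def a2_def b2_def c2_def a1_def b1_def c1_def
    by (simp add: field_simps; simp add: algebra_simps sd td)
  show "m2 * c1 + b2 * b1 + c2 * (m1 + c1 * w) = 0"
    using nz unfolding m1_def m2_def a2_def b2_def c2_def a1_def b1_def c1_def
    by (simp add: field_simps; simp add: algebra_simps sd td)
qed

lemma inv_unique:
  fixes A B :: "real^'n::finite^'n"
  assumes "A ** B = mat 1"
  shows "matrix_inv A = B"
proof -
  have BA: "B ** A = mat 1" using assms matrix_left_right_inverse by blast
  let ?A' = "SOME A'. A ** A' = mat 1 \<and> A' ** A = mat 1"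
  have "A ** ?A' = mat 1 \<and> ?A' ** A = mat 1"
    by (rule someI[of _ B]) (use assms BA in blast)
  then have "?A' = ?A' ** (A ** B)" using assms by (simp add: matrix_mul_rid)
  also have "\<dots> = (?A' ** A) ** B" by (simp add: matrix_mul_assoc)
  also have "\<dots> = B" using \<open>A ** ?A' = mat 1 \<and> ?A' ** A = mat 1\<close> by (simp add: matrix_mul_lid)
  finally show ?thesis unfolding matrix_inv_def by simp
qed

lemma inv_Tm:
  fixes l z :: "real^'n::finite"
  assumes "l \<bullet> l = 1" "l \<bullet> z = 0" "z \<bullet> z = w"
    "m1 * m2 = 1"
    "m2 * a1 + a2 * (m1 + a1) + b2 * b1 * w = 0"
    "m2 * b1 + a2 * b1 + b2 * (m1 + c1 * w) = 0"
    "m2 * b1 + b2 * (m1 + a1) + c2 * b1 * w = 0"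
    "m2 * c1 + b2 * b1 + c2 * (m1 + c1 * w) = 0"
  shows "matrix_inv (\<chi> i j. Tm m1 a1 b1 c1 l z i j) = (\<chi> i j. Tm m2 a2 b2 c2 l z i j)"
proof (rule inv_unique)
  show "(\<chi> i j. Tm m1 a1 b1 c1 l z i j) ** (\<chi> i j. Tm m2 a2 b2 c2 l z i j) = mat 1"
    unfolding vec_eq_iff
  proof (intro allI)
    fix i j
    have "((\<chi> i j. Tm m1 a1 b1 c1 l z i j) ** (\<chi> i j. Tm m2 a2 b2 c2 l z i j)) $ i $ j
        = (\<Sum>k\<in>UNIV. Tm m1 a1 b1 c1 l z i k * Tm m2 a2 b2 c2 l z k j)"
      by (simp add: matrix_matrix_mult_def)
    also have "\<dots> = del i j"
      by (simp only: prodTm[OF assms(1-3)] assms(4-8); simp)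
    also have "\<dots> = mat 1 $ i $ j" by (simp add: mat_def del_def)
    finally show "((\<chi> i j. Tm m1 a1 b1 c1 l z i j) ** (\<chi> i j. Tm m2 a2 b2 c2 l z i j)) $ i $ j = mat 1 $ i $ j" .
  qed
qed

lemma gco_Tm: "gco p0 p1 p2 s (l$i) (l$j) (z$i) (z$j) (del i j) =
  Tm (p0*(p0 - s*p1)) (s*p0*p1) (p0*p1) (p1*p1 + p0*p2) l z i j"
  by (simp add: gco_def Tm_def algebra_simps)

lemma cco_split: "cco p0 p1 p2 p3 s u li lj zi zj d vi vj a b =
   ((p0*p1 - s*(p1*p1 + p0*p2)) / (2*u)) * (d*b + vi*zj + vj*zi - (li*lj*b + li*zj*a + zi*lj*a))
   + ((3*p1*p2 + p0*p3) / (2*u)) * zi*zj*b"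
  by (simp only: cco_def times_divide_eq_left add_divide_distrib[symmetric])

lemma quad_scalar:
  fixes p0 p1 p2 s w \<sigma> \<tau> :: real
  assumes "p0 \<noteq> 0" "\<sigma> = p0 - s*p1" "\<tau> = \<sigma> + w*p2"
  shows "p0*\<sigma> * (w + (p0*p1*w/(p0*p0))\<^sup>2) + s*p0*p1 * (- (p0*p1*w/(p0*p0)))\<^sup>2
     + p0*p1 * (2 * ((- (p0*p1*w/(p0*p0))) * w)) + (p1*p1+p0*p2) * w\<^sup>2 = w * (p0 * \<tau>)"
  using assms(1) by (simp add: field_simps power2_eq_square assms(2,3); simp add: algebra_simps)

lemma norm_scalar:
  fixes p0 p2 w \<sigma> \<tau> :: real
  assumes "p0 \<noteq> 0" "\<sigma> \<noteq> 0" "\<tau> \<noteq> 0" "\<tau> = \<sigma> + w*p2"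
  shows "1/(p0*\<sigma>) * w + (-p2/(\<sigma>*(p0*\<tau>))) * w\<^sup>2 = w / (p0*\<tau>)"
  using assms(1-3) by (simp add: field_simps power2_eq_square; simp add: algebra_simps assms(4))

lemma alpha_scalar:
  fixes p0 p1 p2 p3 s w u n \<sigma> \<tau> :: real
  assumes "u \<noteq> 0" "p0 \<noteq> 0" "\<sigma> \<noteq> 0" "\<tau> \<noteq> 0" "\<sigma> = p0 - s*p1" "\<tau> = \<sigma> + w*p2"
  shows "((p0*p1 - s*(p1*p1 + p0*p2)) / (2*u)) * ((n + 1) * (1/(p0*\<sigma>)) + 3 * (-p2/(\<sigma>*(p0*\<tau>))) * w)
     + ((3*p1*p2 + p0*p3) / (2*u)) * w * (1/(p0*\<sigma>) + (-p2/(\<sigma>*(p0*\<tau>))) * w)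
   = ((n + 1) * (\<sigma> * p1 - s * p0 * p2) * (\<sigma> + w * p2) + w * (\<sigma> * p3 + 3 * s * p2\<^sup>2) * p0)
     / (2 * u * \<sigma> * (p0 * \<tau>))"
  using assms(1-4) by (simp add: field_simps power2_eq_square; simp add: algebra_simps assms(5,6))

theorem corollary1:
  fixes U :: "(real^'n) set"
    and \<phi> :: "real \<Rightarrow> real \<Rightarrow> real"
    and \<Omega> :: "(real \<times> real) set"
    and F :: "real^'n \<Rightarrow> real^'n \<Rightarrow> real"
  assumes "open U" and "connected U" and "U \<noteq> {}"
    and "smooth_on \<Omega> (\<lambda>p. \<phi> (fst p) (snd p))"
    and "\<forall>x\<in>U. \<forall>y. y \<noteq> 0 \<longrightarrow> (norm x, inner x y / norm y) \<in> \<Omega>"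
    and "\<And>x y. F x y = norm y * \<phi> (norm x) (inner x y / norm y)"
    and "finsler_metric U F"
  shows "\<forall>x\<in>U. \<forall>y. y \<noteq> 0 \<longrightarrow>
    (let u = norm y; r = norm x; s = inner x y / norm y;
         p = \<phi> r s;
         p1 = ds \<phi> r s;
         p2 = ds (ds \<phi>) r s;
         p3 = ds (ds (ds \<phi>)) r s;
         \<sigma>\<^sub>1 = p - s * p1;
         \<rho> = p * (\<sigma>\<^sub>1 + (r\<^sup>2 - s\<^sup>2) * p2)
     in \<sigma>\<^sub>1 \<noteq> 0 \<longrightarrow>
        mean_cartan_norm F x y =
          \<bar>((real CARD('n) + 1) * (\<sigma>\<^sub>1 * p1 - s * p * p2) * (\<sigma>\<^sub>1 + (r\<^sup>2 - s\<^sup>2) * p2)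
             + (r\<^sup>2 - s\<^sup>2) * (\<sigma>\<^sub>1 * p3 + 3 * s * p2\<^sup>2) * p)
           / (2 * u * \<sigma>\<^sub>1 * \<rho>)\<bar>
          * sqrt ((r\<^sup>2 - s\<^sup>2) / \<rho>))"
proof (intro ballI allI impI)
  fix x y :: "real^'n"
  assume xU: "x \<in> U" and y0: "y \<noteq> 0"
  have FF: "F = (\<lambda>x y. norm y * \<phi> (norm x) (sf x y))"
    using assms(6) by (intro ext) (simp add: sf_def)
  have HD: "\<And>k y'. y' \<noteq> 0 \<Longrightarrow> ((ds ^^ k) \<phi> (norm x) has_real_derivative (ds ^^ Suc k) \<phi> (norm x) (sf x y')) (at (sf x y'))"
    using ds_deriv[OF assms(4)] assms(5) xU unfolding sf_def by blast
  define s where "s = sf x y"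
  define u where "u = norm y"
  define l where "l = ll y"
  define z where "z = zz x y"
  define w where "w = (norm x)\<^sup>2 - s\<^sup>2"
  define p0 where "p0 = \<phi> (norm x) s"
  define p1 where "p1 = ds \<phi> (norm x) s"
  define p2 where "p2 = ds (ds \<phi>) (norm x) s"
  define p3 where "p3 = ds (ds (ds \<phi>)) (norm x) s"
  define \<sigma> where "\<sigma> = p0 - s * p1"
  define \<tau> where "\<tau> = \<sigma> + w * p2"
  define m1 where "m1 = p0 * \<sigma>"
  define a1 where "a1 = s*p0*p1"
  define b1 where "b1 = p0*p1"
  define c1 where "c1 = p1*p1 + p0*p2"
  have u0: "u \<noteq> 0" using y0 by (simp add: u_def)
  have yy: "y \<bullet> y = u\<^sup>2" by (simp add: u_def power2_norm_eq_inner)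
  have lx: "l \<bullet> x = s" by (simp add: l_def ll_def s_def sf_def inner_commute)
  have ll1: "l \<bullet> l = 1" using u0 yy by (simp add: l_def ll_def u_def[symmetric] power2_eq_square)
  have lz: "l \<bullet> z = 0" by (simp add: z_def zz_def s_def[symmetric] l_def[symmetric] inner_diff_right lx ll1)
  have xx: "x \<bullet> x = norm x * norm x" by (simp add: power2_norm_eq_inner[symmetric] power2_eq_square)
  have zzw: "z \<bullet> z = w"
    by (simp add: xx z_def zz_def s_def[symmetric] l_def[symmetric] inner_diff_right inner_diff_left lx ll1
        inner_commute[of x l] w_def power2_norm_eq_inner power2_eq_square)
  have ly: "l \<bullet> y = u" using u0 yy by (simp add: l_def ll_def power2_eq_square u_def)
  have zy: "z \<bullet> y = 0"
    using u0 by (simp add: z_def zz_def s_def[symmetric] l_def[symmetric] inner_diff_left ly s_def sf_def u_def)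
  have ftg: "\<And>i j. fund_tensor F x y i j = gform x \<phi> y i j"
    using L2[OF HD y0] by (simp add: FF)
  have ftT: "\<And>i j. fund_tensor F x y i j = Tm m1 a1 b1 c1 l z i j"
    unfolding ftg gform_def gco_Tm
    by (simp add: m1_def a1_def b1_def c1_def \<sigma>_def p0_def p1_def p2_def s_def l_def z_def)
  have bilF: "\<And>\<xi>. (\<Sum>i\<in>UNIV. \<Sum>j\<in>UNIV. fund_tensor F x y i j * \<xi>$i * \<xi>$j) =
     m1 * (\<xi> \<bullet> \<xi>) + a1 * (l \<bullet> \<xi>) * (l \<bullet> \<xi>) + b1 * ((l \<bullet> \<xi>) * (z \<bullet> \<xi>) + (z \<bullet> \<xi>) * (l \<bullet> \<xi>)) + c1 * (z \<bullet> \<xi>) * (z \<bullet> \<xi>)"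
    by (simp only: ftT mult.assoc bil)
  have pos: "\<And>\<xi>. \<xi> \<noteq> 0 \<Longrightarrow> 0 < (\<Sum>i\<in>UNIV. \<Sum>j\<in>UNIV. fund_tensor F x y i j * \<xi>$i * \<xi>$j)"
    using assms(7) xU y0 unfolding finsler_metric_def by blast
  have p00: "p0 \<noteq> 0"
  proof
    assume "p0 = 0"
    then have "(\<Sum>i\<in>UNIV. \<Sum>j\<in>UNIV. fund_tensor F x y i j * y$i * y$j) = 0"
      by (simp add: bilF m1_def a1_def b1_def c1_def zy)
    with pos[OF y0] show False by simp
  qed
  have main: "\<sigma> \<noteq> 0 \<Longrightarrow> mean_cartan_norm F x y =
     \<bar>((real CARD('n) + 1) * (\<sigma> * p1 - s * p0 * p2) * (\<sigma> + w * p2) + w * (\<sigma> * p3 + 3 * s * p2\<^sup>2) * p0)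
       / (2 * u * \<sigma> * (p0 * (\<sigma> + w * p2)))\<bar> * sqrt (w / (p0 * (\<sigma> + w * p2)))"
  proof -
    assume \<sigma>0: "\<sigma> \<noteq> 0"
    have \<tau>0: "\<tau> \<noteq> 0"
    proof (cases "w = 0")
      case True then show ?thesis using \<sigma>0 by (simp add: \<tau>_def)
    next
      case False
      define \<xi> where "\<xi> = z - (b1*w/(p0*p0)) *\<^sub>R l"
      have zl: "z \<bullet> l = 0" using lz by (simp add: inner_commute)
      have l\<xi>: "l \<bullet> \<xi> = - (b1*w/(p0*p0))" by (simp add: \<xi>_def inner_diff_right ll1 lz)
      have z\<xi>: "z \<bullet> \<xi> = w" by (simp add: \<xi>_def inner_diff_right zzw zl)
      have \<xi>\<xi>: "\<xi> \<bullet> \<xi> = w + (b1*w/(p0*p0)) * (b1*w/(p0*p0))"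
        by (simp add: \<xi>_def inner_diff_left inner_diff_right zzw lz zl ll1)
      have \<xi>0: "\<xi> \<noteq> 0" using z\<xi> False by auto
      have "m1 * (\<xi> \<bullet> \<xi>) + a1 * (l \<bullet> \<xi>) * (l \<bullet> \<xi>) + b1 * ((l \<bullet> \<xi>) * (z \<bullet> \<xi>) + (z \<bullet> \<xi>) * (l \<bullet> \<xi>)) + c1 * (z \<bullet> \<xi>) * (z \<bullet> \<xi>)
         = w * (p0 * \<tau>)"
        unfolding l\<xi> z\<xi> \<xi>\<xi> using p00
        by (simp add: m1_def a1_def b1_def c1_def field_simps; simp add: \<tau>_def \<sigma>_def algebra_simps)
      with pos[OF \<xi>0] bilF[of \<xi>] have "0 < w * (p0 * \<tau>)" by simp
      then show ?thesis by auto
    qed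
    define m2 where "m2 = 1/(p0*\<sigma>)"
    define a2 where "a2 = (p0*\<sigma> + c1*w)/(p0*p0*(p0*\<tau>)) - 1/(p0*\<sigma>)"
    define b2 where "b2 = -p1/(p0*(p0*\<tau>))"
    define c2 where "c2 = -p2/(\<sigma>*(p0*\<tau>))"
    note sc = inv_scalars[OF p00 \<sigma>0 \<tau>0 \<sigma>_def \<tau>_def m1_def a1_def b1_def c1_def m2_def a2_def b2_def c2_def]
    have fm: "fund_matrix F x y = (\<chi> i j. Tm m1 a1 b1 c1 l z i j)" by (simp add: fund_matrix_def ftT)
    have Minv: "matrix_inv (fund_matrix F x y) = (\<chi> i j. Tm m2 a2 b2 c2 l z i j)"
      unfolding fm by (rule inv_Tm[OF ll1 lz zzw sc])
    define K1 where "K1 = (p0*p1 - s*(p1*p1 + p0*p2)) / (2*u)"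
    define K2 where "K2 = (3*p1*p2 + p0*p3) / (2*u)"
    have cT: "\<And>i j k. cartan F x y i j k = K1 * (del i j * z$k + del i k * z$j + del k j * z$i
        - (l$i * l$j * z$k + l$i * z$j * l$k + z$i * l$j * l$k)) + K2 * (z$i * z$j * z$k)"
    proof -
      fix i j k
      have "cartan F x y i j k = cform x \<phi> y i j k" using L3[OF HD y0] by (simp add: FF)
      then show "cartan F x y i j k = K1 * (del i j * z$k + del i k * z$j + del k j * z$i
        - (l$i * l$j * z$k + l$i * z$j * l$k + z$i * l$j * l$k)) + K2 * (z$i * z$j * z$k)"
        by (simp add: cform_def cco_split K1_def K2_def p0_def p1_def p2_def p3_def s_def u_def l_def z_def
            del_sym[of k i] mult.assoc)
    qed
    define \<alpha> where "\<alpha> = K1 * ((real CARD('n) + 1) * m2 + 3 * c2 * w) + K2 * w * (m2 + c2 * w)"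
    have mc: "\<And>i. mean_cartan F x y i = z$i * \<alpha>"
    proof -
      fix i
      have "mean_cartan F x y i = (\<Sum>j\<in>UNIV. \<Sum>k\<in>UNIV. Tm m2 a2 b2 c2 l z j k * (K1 * (del i j * z$k + del i k * z$j + del k j * z$i
        - (l$i * l$j * z$k + l$i * z$j * l$k + z$i * l$j * l$k)) + K2 * (z$i * z$j * z$k)))"
        by (simp only: mean_cartan_def Minv cT vec_lambda_beta)
      also have "\<dots> = z$i * \<alpha>" by (simp only: contract[OF ll1 lz zzw] \<alpha>_def)
      finally show "mean_cartan F x y i = z$i * \<alpha>" .
    qed
    have "(\<Sum>i\<in>UNIV. \<Sum>j\<in>UNIV. matrix_inv (fund_matrix F x y) $ i $ j * mean_cartan F x y i * mean_cartan F x y j)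
       = (\<Sum>i\<in>UNIV. \<Sum>j\<in>UNIV. Tm m2 a2 b2 c2 l z i j * ((\<alpha> *\<^sub>R z)$i * (\<alpha> *\<^sub>R z)$j))"
      by (simp add: Minv mc mult_ac)
    also have "\<dots> = \<alpha>\<^sup>2 * (m2 * w + c2 * w\<^sup>2)"
      by (simp only: bil) (simp add: zzw lz power2_eq_square algebra_simps)
    also have "\<dots> = \<alpha>\<^sup>2 * (w / (p0 * \<tau>))"
      using norm_scalar[OF p00 \<sigma>0 \<tau>0 \<tau>_def] by (simp add: m2_def c2_def)
    finally have nn: "mean_cartan_norm F x y = sqrt (\<alpha>\<^sup>2 * (w / (p0 * \<tau>)))"
      by (simp add: mean_cartan_norm_def)
    have aeq: "\<alpha> = ((real CARD('n) + 1) * (\<sigma> * p1 - s * p0 * p2) * (\<sigma> + w * p2) + w * (\<sigma> * p3 + 3 * s * p2\<^sup>2) * p0)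
     / (2 * u * \<sigma> * (p0 * \<tau>))"
      unfolding \<alpha>_def K1_def K2_def m2_def c2_def
      by (rule alpha_scalar[OF u0 p00 \<sigma>0 \<tau>0 \<sigma>_def \<tau>_def])
    have "mean_cartan_norm F x y = \<bar>\<alpha>\<bar> * sqrt (w / (p0 * \<tau>))" using nn by (simp only: real_sqrt_mult real_sqrt_abs)
    then show ?thesis using aeq by (simp only: \<tau>_def)
  qed
  have sx: "inner x y / norm y = s" by (simp add: s_def sf_def)
  show "let u = norm y; r = norm x; s = inner x y / norm y;
         p = \<phi> r s;
         p1 = ds \<phi> r s;
         p2 = ds (ds \<phi>) r s;
         p3 = ds (ds (ds \<phi>)) r s;
         \<sigma>\<^sub>1 = p - s * p1;
         \<rho> = p * (\<sigma>\<^sub>1 + (r\<^sup>2 - s\<^sup>2) * p2)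
     in \<sigma>\<^sub>1 \<noteq> 0 \<longrightarrow>
        mean_cartan_norm F x y =
          \<bar>((real CARD('n) + 1) * (\<sigma>\<^sub>1 * p1 - s * p * p2) * (\<sigma>\<^sub>1 + (r\<^sup>2 - s\<^sup>2) * p2)
             + (r\<^sup>2 - s\<^sup>2) * (\<sigma>\<^sub>1 * p3 + 3 * s * p2\<^sup>2) * p)
           / (2 * u * \<sigma>\<^sub>1 * \<rho>)\<bar>
          * sqrt ((r\<^sup>2 - s\<^sup>2) / \<rho>)"
    unfolding Let_def sx using main
    by (simp add: \<sigma>_def p0_def p1_def p2_def p3_def w_def u_def)
qed


end
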